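(* Let $\psi$ be a complete Bernstein function, not identically zero, and for $\lambda>0$ let \[\vartheta_\lambda=-\frac1\pi\int_0^\infty\frac{\lambda}{\lambda^2-\zeta^2}\log\frac{\psi'(\lambda^2)(\lambda^2-\zeta^2)}{\psi(\lambda^2)-\psi(\zeta^2)}\,d\zeta.\] Then for every $\lambda>0$, \[\Big(\inf_{\xi>0}\frac{\xi|\psi''(\xi)|}{\psi'(\xi)}\Big)\frac\pi4\le\vartheta_\lambda\le\Big(\sup_{\xi>0}\frac{\xi|\psi''(\xi)|}{\psi'(\xi)}\Big)\frac\pi4.\]
   Context: A function $f$ on $(0,\infty)$ is a complete Bernstein function if $f(z)=c_1+c_2z+\frac1\pi\int_{(0,\infty)}\frac{z}{z+s}\frac{m(ds)}{s}$ with $c_1,c_2\ge0$, $m$ a Radon measure on $(0,\infty)$ with $\int\min(s^{-1},s^{-2})\,m(ds)<\infty$. (In the paper $\psi$ is the function with $\Psi(\xi)=\psi(\xi^2)$ the L\'evy--Khintchine exponent of a non-trivial L\'evy process.) *)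

theory Defs
  imports "HOL-Analysis.Analysis"
begin

text \<open>Complete Bernstein function on (0,inf):
  f z = c1 + c2 z + (1/pi) int_(0,inf) z/(z+s) m(ds)/s, with c1, c2 \<ge> 0 and m a Borel
  measure on the reals concentrated on (0,inf) with int min(1/s,1/s^2) m(ds) < inf
  (this integrability condition implies that m is Radon on (0,inf)).\<close>
definition complete_bernstein :: "(real \<Rightarrow> real) \<Rightarrow> bool" where
  "complete_bernstein f \<longleftrightarrow>
     (\<exists>c1 c2 (m :: real measure).
        c1 \<ge> 0 \<and> c2 \<ge> 0 \<and> sets m = sets borel \<and> emeasure m {..0} = 0 \<and>
        integrable m (\<lambda>s. min (1 / s) (1 / s\<^sup>2)) \<and>
        (\<forall>z>0. f z = c1 + c2 * z + (1 / pi) * (\<integral>s. z / (z + s) / s \<partial>m)))"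

definition vartheta :: "(real \<Rightarrow> real) \<Rightarrow> real \<Rightarrow> real" where
  "vartheta \<psi> lam = - (1 / pi) *
     (LINT \<zeta>:{0<..}|lborel. lam / (lam\<^sup>2 - \<zeta>\<^sup>2) *
        ln (deriv \<psi> (lam\<^sup>2) * (lam\<^sup>2 - \<zeta>\<^sup>2) / (\<psi> (lam\<^sup>2) - \<psi> (\<zeta>\<^sup>2))))"

end

theory Submission
  imports Defs "HOL-Real_Asymp.Real_Asymp"
begin
definition Qf :: "real \<Rightarrow> real \<Rightarrow> real" where
  "Qf b y = (if b = 1 then ln y else (y powr (1 - b) - 1) / (1 - b))"

lemma Qf_one[simp]: "Qf b 1 = 0"
  by (simp add: Qf_def)

lemma Qf_deriv: assumes "y > 0" shows "(Qf b has_real_derivative y powr (-b)) (at y)"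
proof (cases "b = 1")
  case True
  then show ?thesis using assms unfolding Qf_def
    by (auto intro!: derivative_eq_intros simp: powr_minus_divide)
next
  case False
  have "((\<lambda>y. (y powr (1 - b) - 1) / (1 - b)) has_real_derivative ((1-b) * y powr (1 - b - 1)) / (1-b)) (at y)"
    using assms by (auto intro!: derivative_eq_intros)
  moreover have "((1-b) * y powr (1 - b - 1)) / (1-b) = y powr (-b)" using False by simp
  ultimately show ?thesis using False unfolding Qf_def by simp
qed

lemma Qf_inv: assumes "y > 0" shows "Qf b (1/y) = - (y powr (b - 1)) * Qf b y"
proof (cases "b = 1")
  case True then show ?thesis using assms by (simp add: Qf_def ln_div)
next
  case False
  have e: "(1/y) powr (1 - b) = y powr (b - 1)"
    using assms by (simp add: powr_divide powr_minus_divide[symmetric] minus_diff_eq)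
  have "y powr (b - 1) * y powr (1 - b) = 1" using assms by (simp add: powr_add[symmetric])
  then show ?thesis using False assms e unfolding Qf_def
    by (simp add: field_simps algebra_simps)
qed

lemma Qf_mono: assumes "0 < x" "x < y" shows "Qf b x < Qf b y"
proof (rule DERIV_pos_imp_increasing_open[of x y "Qf b"])
  show "x < y" by fact
  fix z assume "x < z" "z < y"
  then show "\<exists>d. (Qf b has_real_derivative d) (at z) \<and> 0 < d"
    using assms by (intro exI[of _ "z powr (-b)"]) (auto intro: Qf_deriv)
next
  have "\<forall>z\<in>{x..y}. isCont (Qf b) z"
    using assms by (auto intro!: DERIV_isCont[OF Qf_deriv])
  then show "continuous_on {x..y} (Qf b)" by (rule continuous_at_imp_continuous_on)
qed

lemma Qf_pos: "1 < y \<Longrightarrow> Qf b y > 0" using Qf_mono[of 1 y b] by simp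
lemma Qf_neg: "0 < y \<Longrightarrow> y < 1 \<Longrightarrow> Qf b y < 0" using Qf_mono[of y 1 b] by simp

lemma Qf_ratio_pos: "0 < y \<Longrightarrow> y \<noteq> 1 \<Longrightarrow> Qf b y / (y - 1) > 0"
  by (cases "y < 1") (auto simp: Qf_pos Qf_neg divide_neg_neg)

lemma valley:
  fixes E E' :: "real \<Rightarrow> real"
  assumes "a > 0" "E a = 0" "\<And>x. x > 0 \<Longrightarrow> (E has_real_derivative E' x) (at x)"
    "\<And>x. 0 < x \<Longrightarrow> x \<le> a \<Longrightarrow> E' x \<le> 0" "\<And>x. a \<le> x \<Longrightarrow> E' x \<ge> 0" "x > 0"
  shows "E x \<ge> 0"
proof (cases "x \<le> a")
  case True
  have "E a \<le> E x"
  proof (rule DERIV_nonpos_imp_nonincreasing[of x a E, OF True])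
    fix z assume "x \<le> z" "z \<le> a"
    then show "\<exists>y. DERIV E z :> y \<and> y \<le> 0"
      using assms by (intro exI[of _ "E' z"]) auto
  qed
  then show ?thesis using assms by simp
next
  case False
  have "E a \<le> E x"
  proof (rule DERIV_nonneg_imp_nondecreasing[of a x E])
    show "a \<le> x" using False by simp
    fix z assume "a \<le> z" "z \<le> x"
    then show "\<exists>y. DERIV E z :> y \<and> y \<ge> 0"
      using assms by (intro exI[of _ "E' z"]) auto
  qed
  then show ?thesis using assms by simp
qed

lemma Qf_le: assumes "b \<ge> 0" "y > 0" shows "Qf b y \<le> y - 1"
proof -
  have "0 \<le> (y - 1) - Qf b y"
  proof (rule valley[of 1 "\<lambda>y. (y - 1) - Qf b y" "\<lambda>y. 1 - y powr (-b)"])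
    fix x :: real assume "x > 0"
    then show "((\<lambda>y. (y - 1) - Qf b y) has_real_derivative 1 - x powr (-b)) (at x)"
      by (auto intro!: derivative_eq_intros Qf_deriv)
  next
    fix x :: real assume "0 < x" "x \<le> 1"
    then have "x powr (-b) \<ge> 1" using assms
      by (simp add: powr_minus_divide ge_one_powr_ge_zero powr_le1)
    then show "1 - x powr (-b) \<le> 0" by simp
  next
    fix x :: real assume "1 \<le> x"
    then have "x powr (-b) \<le> 1" using assms
      by (simp add: powr_minus_divide ge_one_powr_ge_zero)
    then show "1 - x powr (-b) \<ge> 0" by simp
  qed (use assms in auto)
  then show ?thesis by simp
qed

definition Kf :: "real \<Rightarrow> real \<Rightarrow> real" where
  "Kf b t = 1 / (t\<^sup>2 - 1) * ln (Qf b (t\<^sup>2) / (t\<^sup>2 - 1))"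

lemma Kf_nonpos: assumes "b \<ge> 0" "t > 0" "t \<noteq> 1" shows "Kf b t \<le> 0"
proof -
  have t2: "t\<^sup>2 > 0" "t\<^sup>2 \<noteq> 1" using assms by (auto simp: power2_eq_1_iff)
  have pos: "Qf b (t\<^sup>2) / (t\<^sup>2 - 1) > 0" using Qf_ratio_pos[OF t2] .
  have le: "Qf b (t\<^sup>2) \<le> t\<^sup>2 - 1" using Qf_le[OF assms(1) t2(1)] .
  show ?thesis
  proof (cases "t\<^sup>2 > 1")
    case True
    then have "Qf b (t\<^sup>2) / (t\<^sup>2 - 1) \<le> 1" using le by simp
    then have "ln (Qf b (t\<^sup>2) / (t\<^sup>2 - 1)) \<le> 0" using pos by simp
    then show ?thesis using True unfolding Kf_def by (simp add: divide_nonpos_pos)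
  next
    case False
    then have lt: "t\<^sup>2 < 1" using t2 by simp
    then have "Qf b (t\<^sup>2) / (t\<^sup>2 - 1) \<ge> 1" using le by (simp add: le_divide_eq)
    then have "ln (Qf b (t\<^sup>2) / (t\<^sup>2 - 1)) \<ge> 0" using pos by simp
    then show ?thesis using lt unfolding Kf_def by (simp add: divide_nonneg_neg)
  qed
qed

lemma Kf_reflect: assumes "0 < u" "u < 1"
  shows "Kf b u + Kf b (1/u) / u\<^sup>2 = 2 * b * ln u / (1 - u\<^sup>2)"
proof -
  define y where "y = u\<^sup>2"
  have y: "0 < y" "y < 1" using assms by (auto simp: y_def power_less_one_iff)
  define L where "L = ln (Qf b y / (y - 1))"
  have pos: "Qf b y / (y - 1) > 0" using Qf_ratio_pos[of y b] y by simp
  have inv2: "(1/u)\<^sup>2 = 1 / y" by (simp add: y_def power_divide)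
  have "Qf b (1/y) / (1/y - 1) = y powr b * (Qf b y / (y - 1))"
  proof -
    have "Qf b (1/y) = - (y powr (b - 1)) * Qf b y" by (rule Qf_inv) (use y in simp)
    moreover have "y powr (b - 1) = y powr b / y" using y by (simp add: powr_diff)
    ultimately show ?thesis using y by (simp add: field_simps)
  qed
  moreover have "ln (y powr b * (Qf b y / (y - 1))) = ln (y powr b) + L"
    unfolding L_def using pos y by (intro ln_mult_pos) auto
  ultimately have "ln (Qf b (1/y) / (1/y - 1)) = b * ln y + L"
    using y by (simp add: ln_powr)
  moreover have "ln y = 2 * ln u" using assms by (simp add: y_def ln_realpow)
  ultimately have e1: "Kf b (1/u) / u\<^sup>2 = (2 * b * ln u + L) / (1 - y)"
    unfolding Kf_def inv2 using y by (simp add: y_def[symmetric] field_simps)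
  have e2: "Kf b u = - L / (1 - y)" unfolding Kf_def L_def y_def[symmetric]
    using y by (simp add: field_simps)
  have "Kf b u + Kf b (1/u) / u\<^sup>2 = - L / (1 - y) + (2 * b * ln u + L) / (1 - y)"
    using e1 e2 by simp
  also have "\<dots> = 2 * b * ln u / (1 - y)"
    by (simp add: diff_divide_distrib[symmetric] add_divide_distrib[symmetric])
  finally show ?thesis by (simp add: y_def)
qed

lemma xlnx_tendsto: "((\<lambda>u::real. u * ln u) \<longlongrightarrow> 0) (at_right 0)"
  by real_asymp

lemma mono_log_int:
  fixes n :: nat
  shows "set_integrable lborel (einterval 0 1) (\<lambda>u. u^n * (- ln u))"
    "(LBINT u=0..1. u^n * (- ln u)) = 1 / (real n + 1)^2"
proof -
  define c where "c = real n + 1"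
  have c: "c > 0" by (simp add: c_def)
  define F where "F u = u^(n+1) / c^2 - u^(n+1) * ln u / c" for u :: real
  have F: "(F has_real_derivative u^n * (- ln u)) (at u)" if "0 < u" for u
  proof -
    have d1: "((\<lambda>u. u^(n+1)) has_real_derivative c * u^n) (at u)"
      using DERIV_pow[of "n+1" u] by (simp add: c_def add.commute)
    have d2: "(ln has_real_derivative 1/u) (at u)" using that by (rule DERIV_ln_divide)
    have "(F has_real_derivative (c*u^n)/c^2 - (c*u^n * ln u + (1/u) * u^(n+1))/c) (at u)"
      unfolding F_def by (intro DERIV_diff DERIV_cdivide DERIV_mult d1 d2)
    moreover have "(c*u^n)/c^2 - (c*u^n * ln u + (1/u) * u^(n+1))/c = u^n * (- ln u)"
      using that c by (simp add: field_simps power2_eq_square)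
    ultimately show ?thesis by simp
  qed
  have A: "((F \<circ> real_of_ereal) \<longlongrightarrow> 0) (at_right 0)"
  proof -
    have e: "F = (\<lambda>u. u^(n+1) / c^2 - u^n * (u * ln u) / c)"
      unfolding F_def by (auto simp: algebra_simps)
    have "(F \<longlongrightarrow> 0^(n+1) / c^2 - 0^n * 0 / c) (at_right 0)"
      unfolding e using c by (intro tendsto_intros xlnx_tendsto) auto
    then have "(F \<longlongrightarrow> 0) (at_right 0)" by simp
    then show ?thesis unfolding zero_ereal_def ereal_tendsto_simps by simp
  qed
  have B: "((F \<circ> real_of_ereal) \<longlongrightarrow> 1 / (real n + 1)^2) (at_left 1)"
  proof -
    have "isCont F 1" unfolding F_def using c by (intro continuous_intros) auto
    then have "(F \<longlongrightarrow> F 1) (at_left 1)"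
      by (simp add: isCont_def filterlim_at_split)
    moreover have "F 1 = 1 / (real n + 1)^2" by (simp add: F_def c_def)
    ultimately show ?thesis unfolding one_ereal_def ereal_tendsto_simps by simp
  qed
  have lt: "(0::ereal) < 1" by simp
  have D: "DERIV F x :> x ^ n * - ln x" if "0 < ereal x" "ereal x < 1" for x
    using F that by simp
  have C: "isCont (\<lambda>u. u ^ n * - ln u) x" if "0 < ereal x" "ereal x < 1" for x
    using that by (auto intro!: continuous_intros)
  have N: "AE x in lborel. 0 < ereal x \<longrightarrow> ereal x < 1 \<longrightarrow> 0 \<le> x ^ n * - ln x"
    by (intro AE_I2 impI) (auto intro!: mult_nonneg_nonpos simp: ln_le_zero_iff)
  note R = interval_integral_FTC_nonneg[OF lt D C N A B]
  then show "set_integrable lborel (einterval 0 1) (\<lambda>u. u^n * (- ln u))"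
    "(LBINT u=0..1. u^n * (- ln u)) = 1 / (real n + 1)^2" by auto
qed

lemma odd_squares_sums: "(\<lambda>k::nat. 1 / (2 * real k + 1)^2) sums (pi^2 / 8)"
proof -
  have b: "(\<lambda>n::nat. 1 / (real n + 1)^2) sums (pi^2 / 6)"
    using inverse_squares_sums by (simp add: add.commute)
  from sums_group[OF b, of 2]
  have g: "(\<lambda>n. 1 / (2 * real n + 1)^2 + 1 / (2 * real n + 2)^2) sums (pi^2 / 6)"
    by (simp add: mult.commute algebra_simps)
  have "(\<lambda>n::nat. 1 / (real n + 1)^2 * (1/4)) sums (pi^2 / 6 * (1/4))"
    by (rule sums_mult2[OF b])
  moreover have "(\<lambda>n::nat. 1 / (real n + 1)^2 * (1/4)) = (\<lambda>n. 1 / (2 * real n + 2)^2)"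
    by (auto simp: field_simps power2_eq_square)
  ultimately have e: "(\<lambda>n. 1 / (2 * real n + 2)^2) sums (pi^2 / 24)" by simp
  from sums_diff[OF g e] show ?thesis by simp
qed

definition Hf :: "real \<Rightarrow> real" where "Hf u = - ln u / (1 - u^2)"

lemma Hf_int:
  shows "integrable lborel (\<lambda>u. indicator {0<..<1} u * Hf u)"
    "(\<integral>u. indicator {0<..<1} u * Hf u \<partial>lborel) = pi^2 / 8"
proof -
  define g where "g k u = indicator {0<..<1} u * (u^(2*k) * (- ln u))" for k :: nat and u :: real
  have gnn: "g k u \<ge> 0" for k u
    by (auto simp: g_def indicator_def ln_le_zero_iff intro!: mult_nonneg_nonpos)
  have gint: "integrable lborel (g k)" and gval: "integral\<^sup>L lborel (g k) = 1 / (2 * real k + 1)^2" for k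
  proof -
    have "set_integrable lborel (einterval 0 1) (\<lambda>u. u^(2*k) * (- ln u))"
      by (rule mono_log_int)
    then show "integrable lborel (g k)"
      unfolding set_integrable_def g_def by (simp add: zero_ereal_def one_ereal_def)
    have "(LBINT u=0..1. u^(2*k) * (- ln u)) = 1 / (real (2*k) + 1)^2"
      by (rule mono_log_int)
    then show "integral\<^sup>L lborel (g k) = 1 / (2 * real k + 1)^2"
      unfolding g_def interval_lebesgue_integral_def set_lebesgue_integral_def
      by (simp add: zero_ereal_def one_ereal_def)
  qed
  have gm: "g k \<in> borel_measurable borel" for k using gint[of k] by auto
  have nn: "(\<integral>\<^sup>+u. ennreal (g k u) \<partial>lborel) = ennreal (1 / (2 * real k + 1)^2)" for k
    using nn_integral_eq_integral[OF gint[of k]] gnn gval by simp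
  have pt: "(\<Sum>k. ennreal (g k u)) = ennreal (indicator {0<..<1} u * Hf u)" for u
  proof (cases "u \<in> {0<..<1}")
    case True
    then have u: "0 < u" "u < 1" by auto
    have "(\<lambda>k. (u^2)^k) sums (1 / (1 - u^2))"
      using u by (intro geometric_sums) (auto simp: abs_square_less_1)
    from sums_mult2[OF this, of "- ln u"]
    have "(\<lambda>k. g k u) sums (indicator {0<..<1} u * Hf u)"
      using True by (simp add: g_def Hf_def power_mult)
    then show ?thesis using gnn
      by (simp add: suminf_ennreal2 sums_summable sums_unique[symmetric])
  next
    case False
    then show ?thesis by (simp add: g_def)
  qed
  have "(\<integral>\<^sup>+u. ennreal (indicator {0<..<1} u * Hf u) \<partial>lborel) = (\<Sum>k. \<integral>\<^sup>+u. ennreal (g k u) \<partial>lborel)"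
    unfolding pt[symmetric] by (rule nn_integral_suminf) (use gm in auto)
  also have "\<dots> = (\<Sum>k. ennreal (1 / (2 * real k + 1)^2))" by (simp add: nn)
  also have "\<dots> = ennreal (pi^2 / 8)"
    using odd_squares_sums by (simp add: suminf_ennreal2 sums_summable sums_unique[symmetric])
  finally have E: "(\<integral>\<^sup>+u. ennreal (indicator {0<..<1} u * Hf u) \<partial>lborel) = ennreal (pi^2 / 8)" .
  have M: "(\<lambda>u. indicator {0<..<1} u * Hf u) \<in> borel_measurable lborel"
    unfolding Hf_def by measurable
  have P: "AE u in lborel. 0 \<le> indicator {0<..<1} u * Hf u"
  proof (intro AE_I2)
    fix u :: real
    show "0 \<le> indicator {0<..<1} u * Hf u"
    proof (cases "u \<in> {0<..<1}")
      case True
      then have "u^2 < 1" by (simp add: abs_square_less_1)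
      then show ?thesis using True by (auto simp: Hf_def ln_le_zero_iff intro!: divide_nonpos_pos)
    qed simp
  qed
  from nn_integral_eq_integrable[OF M P, of "pi^2/8"] E
  show "integrable lborel (\<lambda>u. indicator {0<..<1} u * Hf u)"
    "(\<integral>u. indicator {0<..<1} u * Hf u \<partial>lborel) = pi^2 / 8" by auto
qed

lemma Qf_measurable[measurable]: "Qf b \<in> borel_measurable borel"
  unfolding Qf_def by measurable

lemma Kf_measurable[measurable]: "Kf b \<in> borel_measurable borel"
  unfolding Kf_def by measurable

lemma Kf_isCont: assumes "t > 0" "t \<noteq> 1" shows "isCont (Kf b) t"
proof -
  have t2: "t\<^sup>2 > 0" "t\<^sup>2 \<noteq> 1" using assms by (auto simp: power2_eq_1_iff)
  have q: "isCont (Qf b) (t\<^sup>2)" using Qf_deriv[OF t2(1)] by (rule DERIV_isCont)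
  have qq: "isCont (\<lambda>t. Qf b (t\<^sup>2)) t"
    using continuous_at_compose[of t "\<lambda>t. t\<^sup>2" "Qf b"] q by (simp add: o_def)
  have pos: "Qf b (t\<^sup>2) / (t\<^sup>2 - 1) > 0" using Qf_ratio_pos[OF t2] .
  show ?thesis unfolding Kf_def using t2 pos
    by (intro continuous_intros qq) auto
qed

lemma Kf_pair_int:
  assumes "b \<ge> 0"
  shows "integrable lborel (\<lambda>u. indicator {0<..<1} u * (- Kf b u))"
    "integrable lborel (\<lambda>u. indicator {0<..<1} u * (- Kf b (1/u) / u\<^sup>2))"
    "(\<integral>u. indicator {0<..<1} u * (- Kf b u) \<partial>lborel) + (\<integral>u. indicator {0<..<1} u * (- Kf b (1/u) / u\<^sup>2) \<partial>lborel)
      = b * pi^2 / 4"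
proof -
  have eq: "indicator {0<..<1} u * (- Kf b u) + indicator {0<..<1} u * (- Kf b (1/u) / u\<^sup>2)
      = 2 * b * (indicator {0<..<1} u * Hf u)" for u
  proof (cases "u \<in> {0<..<1}")
    case True
    then show ?thesis using Kf_reflect[of u b] by (auto simp: Hf_def field_simps)
  qed simp
  have nn1: "0 \<le> indicator {0<..<1} u * (- Kf b u)" for u
    using Kf_nonpos[OF assms, of u] by (auto simp: indicator_def)
  have nn2: "0 \<le> indicator {0<..<1} u * (- Kf b (1/u) / u\<^sup>2)" for u
  proof (cases "u \<in> {0<..<1}")
    case True
    then have "1/u > 0" "1/u \<noteq> 1" by auto
    then show ?thesis using Kf_nonpos[OF assms, of "1/u"] True by (auto intro!: divide_nonpos_pos)
  qed simp
  have I: "integrable lborel (\<lambda>u. 2 * b * (indicator {0<..<1} u * Hf u))"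
    using Hf_int(1) by simp
  show i1: "integrable lborel (\<lambda>u. indicator {0<..<1} u * (- Kf b u))"
  proof (rule Bochner_Integration.integrable_bound[OF I])
    show "(\<lambda>u. indicator {0<..<1} u * (- Kf b u)) \<in> borel_measurable lborel" by measurable
    show "AE x in lborel. norm (indicator {0<..<1} x * (- Kf b x)) \<le> norm (2 * b * (indicator {0<..<1} x * Hf x))"
    proof (intro AE_I2)
      fix x
      have "indicator {0<..<1} x * (- Kf b x) \<le> 2 * b * (indicator {0<..<1} x * Hf x)"
        using nn2[of x] eq[of x] by linarith
      then show "norm (indicator {0<..<1} x * (- Kf b x)) \<le> norm (2 * b * (indicator {0<..<1} x * Hf x))"
        using nn1[of x] by simp
    qed
  qed
  show i2: "integrable lborel (\<lambda>u. indicator {0<..<1} u * (- Kf b (1/u) / u\<^sup>2))"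
  proof (rule Bochner_Integration.integrable_bound[OF I])
    show "(\<lambda>u. indicator {0<..<1} u * (- Kf b (1/u) / u\<^sup>2)) \<in> borel_measurable lborel" by measurable
    show "AE x in lborel. norm (indicator {0<..<1} x * (- Kf b (1/x) / x\<^sup>2)) \<le> norm (2 * b * (indicator {0<..<1} x * Hf x))"
    proof (intro AE_I2)
      fix x
      have "indicator {0<..<1} x * (- Kf b (1/x) / x\<^sup>2) \<le> 2 * b * (indicator {0<..<1} x * Hf x)"
        using nn1[of x] eq[of x] by linarith
      then show "norm (indicator {0<..<1} x * (- Kf b (1/x) / x\<^sup>2)) \<le> norm (2 * b * (indicator {0<..<1} x * Hf x))"
        using nn2[of x] by simp
    qed
  qed
  have "(\<integral>u. indicator {0<..<1} u * (- Kf b u) \<partial>lborel) + (\<integral>u. indicator {0<..<1} u * (- Kf b (1/u) / u\<^sup>2) \<partial>lborel)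
     = (\<integral>u. 2 * b * (indicator {0<..<1} u * Hf u) \<partial>lborel)"
    unfolding eq[symmetric] by (rule Bochner_Integration.integral_add[OF i1 i2, symmetric])
  also have "\<dots> = b * pi^2 / 4" using Hf_int(2) by simp
  finally show "(\<integral>u. indicator {0<..<1} u * (- Kf b u) \<partial>lborel) + (\<integral>u. indicator {0<..<1} u * (- Kf b (1/u) / u\<^sup>2) \<partial>lborel)
      = b * pi^2 / 4" .
qed

lemma reflect_integral:
  fixes F :: "real \<Rightarrow> real"
  shows "integrable lborel (\<lambda>x. F (- x)) \<longleftrightarrow> integrable lborel F"
    "(\<integral>x. F (- x) \<partial>lborel) = (\<integral>x. F x \<partial>lborel)"
  using lborel_integrable_real_affine_iff[of "-1" F 0] lborel_integral_real_affine[of "-1" F 0]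
  by auto

lemma Kf_tail:
  assumes "b \<ge> 0"
  shows "integrable lborel (\<lambda>t. indicator {1<..} t * (- Kf b t))"
    "(\<integral>t. indicator {1<..} t * (- Kf b t) \<partial>lborel)
      = (\<integral>u. indicator {0<..<1} u * (- Kf b (1/u) / u\<^sup>2) \<partial>lborel)"
proof -
  define f where "f t = - Kf b t" for t
  define g where "g x = - 1 / x" for x :: real
  define g' where "g' x = 1 / x\<^sup>2" for x :: real
  define h where "h x = indicator {-1<..<0} x * (f (g x) * g' x)" for x :: real
  have hr: "h (- x) = indicator {0<..<1} x * (- Kf b (1/x) / x\<^sup>2)" for x
    by (auto simp: h_def f_def g_def g'_def indicator_def)
  have hint: "integrable lborel h"
    using reflect_integral(1)[of h] Kf_pair_int(2)[OF assms] unfolding hr by simp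
  have hval: "(\<integral>x. h x \<partial>lborel) = (\<integral>u. indicator {0<..<1} u * (- Kf b (1/u) / u\<^sup>2) \<partial>lborel)"
    using reflect_integral(2)[of h] unfolding hr by simp
  have ab: "ereal (-1) < ereal 0" by simp
  have D: "DERIV g x :> g' x" if "ereal (-1) < ereal x" "ereal x < ereal 0" for x
    using that unfolding g_def g'_def by (auto intro!: derivative_eq_intros simp: power2_eq_square)
  have C1: "isCont f (g x)" if "ereal (-1) < ereal x" "ereal x < ereal 0" for x
  proof -
    have "g x > 1" using that by (auto simp: g_def field_simps)
    then show ?thesis unfolding f_def by (intro continuous_intros Kf_isCont) auto
  qed
  have C2: "isCont g' x" if "ereal (-1) < ereal x" "ereal x < ereal 0" for x
    using that unfolding g'_def by (intro continuous_intros) auto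
  have N1: "0 \<le> f (g x)" if "ereal (-1) < ereal x" "ereal x < ereal 0" for x
  proof -
    have "g x > 1" using that by (auto simp: g_def field_simps)
    then show ?thesis unfolding f_def using Kf_nonpos[OF assms, of "g x"] by auto
  qed
  have N2: "0 \<le> g' x" if "ereal (-1) \<le> ereal x" "ereal x \<le> ereal 0" for x
    by (simp add: g'_def)
  have A: "((ereal \<circ> g \<circ> real_of_ereal) \<longlongrightarrow> ereal 1) (at_right (ereal (-1)))"
  proof -
    have "(g \<longlongrightarrow> 1) (at_right (-1))"
    proof -
      have "isCont g (-1)" unfolding g_def by (intro continuous_intros) auto
      then have "(g \<longlongrightarrow> g (-1)) (at_right (-1))"
        by (simp add: isCont_def filterlim_at_split)
      then show ?thesis by (simp add: g_def)
    qed
    then show ?thesis by (simp add: ereal_tendsto_simps o_assoc[symmetric])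
  qed
  have B: "((ereal \<circ> g \<circ> real_of_ereal) \<longlongrightarrow> \<infinity>) (at_left (ereal 0))"
  proof -
    have "filterlim g at_top (at_left 0)" unfolding g_def by real_asymp
    then show ?thesis unfolding ereal_tendsto_simps1 ereal_tendsto_simps2 .
  qed
  have I: "set_integrable lborel (einterval (ereal (-1)) (ereal 0)) (\<lambda>x. f (g x) * g' x)"
    using hint unfolding set_integrable_def h_def by simp
  note R = interval_integral_substitution_nonneg[OF ab D C1 C2 N1 N2 A B I]
  from R(1) show "integrable lborel (\<lambda>t. indicator {1<..} t * (- Kf b t))"
    unfolding set_integrable_def f_def by simp
  have "(\<integral>t. indicator {1<..} t * (- Kf b t) \<partial>lborel) = (LBINT x=ereal 1..\<infinity>. f x)"
    unfolding interval_lebesgue_integral_def set_lebesgue_integral_def f_def by simp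
  also have "\<dots> = (LBINT x=ereal (-1)..ereal 0. f (g x) * g' x)" by (rule R(2))
  also have "\<dots> = (\<integral>x. h x \<partial>lborel)"
    unfolding interval_lebesgue_integral_def set_lebesgue_integral_def h_def by simp
  finally show "(\<integral>t. indicator {1<..} t * (- Kf b t) \<partial>lborel)
      = (\<integral>u. indicator {0<..<1} u * (- Kf b (1/u) / u\<^sup>2) \<partial>lborel)" using hval by simp
qed

lemma Kf_total:
  assumes "b \<ge> 0"
  shows "integrable lborel (\<lambda>t. indicator {0<..} t * Kf b t)"
    "(\<integral>t. indicator {0<..} t * Kf b t \<partial>lborel) = - (b * pi^2 / 4)"
proof -
  define A where "A t = indicator {0<..<1} t * (- Kf b t)" for t :: real
  define B where "B t = indicator {1<..} t * (- Kf b t)" for t :: real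
  have iA: "integrable lborel A" unfolding A_def by (rule Kf_pair_int(1)[OF assms])
  have iB: "integrable lborel B" unfolding B_def by (rule Kf_tail(1)[OF assms])
  have ae: "AE t in lborel. - (A t + B t) = indicator {0<..} t * Kf b t"
    by (intro eventually_mono[OF AE_lborel_singleton[of 1]]) (auto simp: A_def B_def indicator_def)
  have m: "(\<lambda>t. indicator {0<..} t * Kf b t) \<in> borel_measurable lborel" by measurable
  have iS: "integrable lborel (\<lambda>t. - (A t + B t))" using iA iB by simp
  show "integrable lborel (\<lambda>t. indicator {0<..} t * Kf b t)"
    by (rule integrable_cong_AE_imp[OF iS m ae])
  have "(\<integral>t. indicator {0<..} t * Kf b t \<partial>lborel) = (\<integral>t. - (A t + B t) \<partial>lborel)"
    by (rule integral_cong_AE[OF m _ ae[THEN AE_mp, OF AE_I2]]) (use iS in auto)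
  also have "\<dots> = - (integral\<^sup>L lborel A + integral\<^sup>L lborel B)"
    using iA iB by simp
  also have "integral\<^sup>L lborel B = (\<integral>u. indicator {0<..<1} u * (- Kf b (1/u) / u\<^sup>2) \<partial>lborel)"
    unfolding B_def by (rule Kf_tail(2)[OF assms])
  also have "integral\<^sup>L lborel A + \<dots> = b * pi^2 / 4"
    unfolding A_def by (rule Kf_pair_int(3)[OF assms])
  finally show "(\<integral>t. indicator {0<..} t * Kf b t \<partial>lborel) = - (b * pi^2 / 4)" .
qed

lemma param_deriv:
  fixes m :: "real measure" and F Q :: "real \<Rightarrow> real \<Rightarrow> real" and G :: "real \<Rightarrow> real"
  assumes z: "z > 0" and r: "r > 0"
    and pos: "AE s in m. s > 0"
    and Fi: "\<And>w. w > 0 \<Longrightarrow> integrable m (F w)"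
    and FQ: "\<And>w s. w > 0 \<Longrightarrow> w \<noteq> z \<Longrightarrow> s > 0 \<Longrightarrow> (F w s - F z s) / (w - z) = Q w s"
    and Qc: "\<And>s. s > 0 \<Longrightarrow> ((\<lambda>w. Q w s) \<longlongrightarrow> Q z s) (at z)"
    and Qm: "\<And>w. Q w \<in> borel_measurable m"
    and Gi: "integrable m G"
    and bd: "\<And>w s. dist w z < r \<Longrightarrow> s > 0 \<Longrightarrow> \<bar>Q w s\<bar> \<le> G s"
    and rz: "r \<le> z"
  shows "((\<lambda>w. \<integral>s. F w s \<partial>m) has_real_derivative (\<integral>s. Q z s \<partial>m)) (at z)"
proof -
  have lim: "((\<lambda>w. \<integral>s. Q w s \<partial>m) \<longlongrightarrow> (\<integral>s. Q z s \<partial>m)) (at z)"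
  proof -
    have "((\<lambda>w. \<integral>s. Q w s \<partial>m) \<longlongrightarrow> (\<integral>s. Q z s \<partial>m)) (at z within ball z r)"
      unfolding tendsto_at_iff_sequentially
    proof (intro allI impI)
      fix X :: "nat \<Rightarrow> real"
      assume X: "\<forall>i. X i \<in> ball z r - {z}" and Xl: "X \<longlonglongrightarrow> z"
      have fX: "filterlim X (at z) sequentially"
        using X Xl by (auto simp: filterlim_at)
      show "((\<lambda>w. \<integral>s. Q w s \<partial>m) \<circ> X) \<longlonglongrightarrow> (\<integral>s. Q z s \<partial>m)"
        unfolding o_def
      proof (rule integral_dominated_convergence[where w=G])
        show "Q z \<in> borel_measurable m" by (rule Qm)
        show "\<And>i. Q (X i) \<in> borel_measurable m" by (rule Qm)
        show "integrable m G" by (rule Gi)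
        show "AE s in m. (\<lambda>i. Q (X i) s) \<longlonglongrightarrow> Q z s"
          using pos by eventually_elim (rule filterlim_compose[OF Qc fX])
        fix i
        show "AE s in m. norm (Q (X i) s) \<le> G s"
          using pos
        proof eventually_elim
          case (elim s)
          have "dist (X i) z < r" using X by (auto simp: dist_commute)
          then show ?case using bd elim by simp
        qed
      qed
    qed
    then show ?thesis using at_within_open[of z "ball z r"] r by simp
  qed
  have ev: "\<forall>\<^sub>F w in at z. (\<integral>s. Q w s \<partial>m) = ((\<integral>s. F w s \<partial>m) - (\<integral>s. F z s \<partial>m)) / (w - z)"
  proof -
    have "\<forall>\<^sub>F w in at z. w \<in> ball z r" using r
      by (intro eventually_at_in_open') auto
    moreover have "\<forall>\<^sub>F w in at z. w \<noteq> z" by (rule eventually_at_filter[THEN iffD2]) simp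
    ultimately show ?thesis
    proof eventually_elim
      case (elim w)
      then have w: "w > 0" "w \<noteq> z" using rz by (auto simp: dist_real_def)
      have "((\<integral>s. F w s \<partial>m) - (\<integral>s. F z s \<partial>m)) / (w - z) = (\<integral>s. (F w s - F z s) / (w - z) \<partial>m)"
        using Fi[OF w(1)] Fi[OF z] by simp
      also have "\<dots> = (\<integral>s. Q w s \<partial>m)"
      proof (rule integral_cong_AE)
        show "(\<lambda>s. (F w s - F z s) / (w - z)) \<in> borel_measurable m"
          using Fi[OF w(1)] Fi[OF z] by auto
        show "Q w \<in> borel_measurable m" by (rule Qm)
        show "AE s in m. (F w s - F z s) / (w - z) = Q w s"
          using pos by eventually_elim (use FQ w in auto)
      qed
      finally show ?case by simp
    qed
  qed
  show ?thesis
    unfolding has_field_derivative_iff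
    by (rule Lim_transform_eventually[OF lim ev])
qed

lemma dom2: fixes h s :: real assumes "h > 0" "s > 0"
  shows "1 / (h + s)\<^sup>2 \<le> (1 + 1 / h\<^sup>2) * min (1 / s) (1 / s\<^sup>2)"
proof (cases "s \<le> 1")
  case True
  have "1 / (h + s)\<^sup>2 \<le> 1 / h\<^sup>2" using assms by (intro divide_left_mono power_mono) auto
  also have "\<dots> \<le> (1 + 1 / h\<^sup>2) * (1 / s)"
  proof -
    have "1 / h\<^sup>2 \<le> (1 / h\<^sup>2) * (1 / s)" using True assms by (simp add: field_simps)
    also have "\<dots> \<le> (1 + 1 / h\<^sup>2) * (1 / s)" using assms by (intro mult_right_mono) auto
    finally show ?thesis .
  qed
  also have "min (1 / s) (1 / s\<^sup>2) = 1 / s" using True assms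
    by (auto simp: min_def field_simps power2_eq_square intro: mult_left_le_one_le)
  ultimately show ?thesis by simp
next
  case False
  have "1 / (h + s)\<^sup>2 \<le> 1 / s\<^sup>2" using assms by (intro divide_left_mono power_mono) auto
  also have "\<dots> \<le> (1 + 1 / h\<^sup>2) * (1 / s\<^sup>2)" using assms by (simp add: field_simps)
  also have "min (1 / s) (1 / s\<^sup>2) = 1 / s\<^sup>2" using False assms
    by (auto simp: min_def field_simps power2_eq_square)
  ultimately show ?thesis by simp
qed

lemma dom0: fixes z s :: real assumes "z > 0" "s > 0"
  shows "\<bar>z / (z + s) / s\<bar> \<le> (1 + z) * min (1 / s) (1 / s\<^sup>2)"
proof (cases "s \<le> 1")
  case True
  have "z / (z + s) \<le> 1" using assms by simp
  then have "z / (z + s) / s \<le> 1 / s" using assms by (intro divide_right_mono) auto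
  also have "\<dots> \<le> (1 + z) * (1 / s)" using assms by (simp add: field_simps)
  also have "min (1 / s) (1 / s\<^sup>2) = 1 / s" using True assms
    by (auto simp: min_def field_simps power2_eq_square intro: mult_left_le_one_le)
  ultimately show ?thesis using assms by simp
next
  case False
  have "z / (z + s) / s \<le> z / s / s" using assms
    by (intro divide_right_mono divide_left_mono) auto
  also have "\<dots> \<le> (1 + z) * (1 / s\<^sup>2)" using assms by (simp add: field_simps power2_eq_square)
  also have "min (1 / s) (1 / s\<^sup>2) = 1 / s\<^sup>2" using False assms
    by (auto simp: min_def field_simps power2_eq_square)
  ultimately show ?thesis using assms by simp
qed

lemma dom3: fixes h A B :: real assumes "h > 0" "A \<ge> h + s" "B \<ge> h + s" "s > 0"
  shows "(A + B) / (A\<^sup>2 * B\<^sup>2) \<le> (2 / h) * (1 / (h + s)\<^sup>2)"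
proof -
  define H where "H = h + s"
  have H: "H > 0" "A \<ge> H" "B \<ge> H" using assms by (auto simp: H_def)
  have "(A + B) / (A\<^sup>2 * B\<^sup>2) = 1 / (A * B\<^sup>2) + 1 / (A\<^sup>2 * B)"
    using H by (simp add: field_simps power2_eq_square)
  also have "1 / (A * B\<^sup>2) \<le> 1 / (H * H\<^sup>2)"
    using H by (intro divide_left_mono mult_mono power_mono mult_pos_pos) auto
  also have "1 / (A\<^sup>2 * B) \<le> 1 / (H\<^sup>2 * H)"
    using H by (intro divide_left_mono mult_mono power_mono mult_pos_pos) auto
  also have "1 / (H * H\<^sup>2) + 1 / (H\<^sup>2 * H) = (2 / H) * (1 / H\<^sup>2)" by (simp add: field_simps)
  also have "\<dots> \<le> (2 / h) * (1 / H\<^sup>2)"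
    using H assms by (intro mult_right_mono divide_left_mono) (auto simp: H_def)
  finally show ?thesis by (simp add: H_def)
qed

lemma alg0: fixes a X P :: real assumes "a \<noteq> 0" shows "(a * X / P) / a = X / P"
  using assms by simp

lemma alg1: fixes w z s :: real assumes "w + s \<noteq> 0" "z + s \<noteq> 0" "s \<noteq> 0" "w \<noteq> z"
  shows "(w / (w + s) / s - z / (z + s) / s) / (w - z) = 1 / ((z + s) * (w + s))"
proof -
  have e: "x / (x + s) / s = 1 / s - 1 / (x + s)" if "x + s \<noteq> 0" for x
  proof -
    have "1 / s - 1 / (x + s) = (1 * (x + s) - 1 * s) / (s * (x + s))"
      by (rule diff_frac_eq[OF assms(3) that])
    also have "\<dots> = x / ((x + s) * s)" by (simp add: mult.commute)
    finally show ?thesis by simp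
  qed
  have "w / (w + s) / s - z / (z + s) / s = 1 / (z + s) - 1 / (w + s)"
    using e[OF assms(1)] e[OF assms(2)] by simp
  also have "\<dots> = (1 * (w + s) - 1 * (z + s)) / ((z + s) * (w + s))"
    by (rule diff_frac_eq[OF assms(2) assms(1)])
  also have "\<dots> = (w - z) * 1 / ((z + s) * (w + s))" by simp
  finally show ?thesis using alg0[of "w - z" 1 "(z + s) * (w + s)"] assms(4) by simp
qed

lemma alg2: fixes w z s :: real assumes "w + s \<noteq> 0" "z + s \<noteq> 0" "w \<noteq> z"
  shows "(1 / (w + s)\<^sup>2 - 1 / (z + s)\<^sup>2) / (w - z) = - (z + w + 2 * s) / ((w + s)\<^sup>2 * (z + s)\<^sup>2)"
proof -
  have "1 / (w + s)\<^sup>2 - 1 / (z + s)\<^sup>2 = (1 * (z + s)\<^sup>2 - 1 * (w + s)\<^sup>2) / ((w + s)\<^sup>2 * (z + s)\<^sup>2)"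
    by (rule diff_frac_eq) (use assms in auto)
  also have "1 * (z + s)\<^sup>2 - 1 * (w + s)\<^sup>2 = (w - z) * (- (z + w + 2 * s))"
    by (simp add: algebra_simps power2_eq_square)
  finally show ?thesis using alg0[of "w - z" "- (z + w + 2 * s)" "(w + s)\<^sup>2 * (z + s)\<^sup>2"] assms(3)
    by simp
qed

lemma alg3: fixes A :: real assumes "A \<noteq> 0" shows "- (A + A) / (A\<^sup>2 * A\<^sup>2) = - (2 * (1 / A^3))"
  using assms by (simp add: field_simps power2_eq_square power3_eq_cube)

context
  fixes m :: "real measure"
  assumes sm: "sets m = sets borel" and m0: "emeasure m {..0} = 0"
    and mi: "integrable m (\<lambda>s. min (1/s) (1/s\<^sup>2))"
begin

lemma bm: "borel_measurable m = borel_measurable borel"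
  by (rule measurable_cong_sets[OF sm refl])

lemma posAE: "AE s in m. s > 0"
proof (rule AE_I'[of "{..0}"])
  show "{..0} \<in> null_sets m" using m0 sm by (auto simp: null_sets_def)
  show "{x \<in> space m. \<not> 0 < x} \<subseteq> {..0}" by auto
qed

lemma int_bound:
  assumes "f \<in> borel_measurable borel" "\<And>s. s > 0 \<Longrightarrow> \<bar>f s\<bar> \<le> C * min (1/s) (1/s\<^sup>2)"
  shows "integrable m f"
proof (rule Bochner_Integration.integrable_bound)
  show "integrable m (\<lambda>s. C * min (1/s) (1/s\<^sup>2))" using mi by simp
  show "f \<in> borel_measurable m" unfolding bm by (rule assms(1))
  show "AE x in m. norm (f x) \<le> norm (C * min (1 / x) (1 / x\<^sup>2))"
    using posAE
  proof eventually_elim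
    case (elim s)
    then show ?case using assms(2)[OF elim] by simp
  qed
qed

definition "I0 z = (\<integral>s. z / (z + s) / s \<partial>m)"
definition "D1 z = (\<integral>s. 1 / (z + s)\<^sup>2 \<partial>m)"
definition "D2 z = (\<integral>s. 1 / (z + s)^3 \<partial>m)"

lemma int_k0: assumes "z > 0" shows "integrable m (\<lambda>s. z / (z + s) / s)"
proof (rule int_bound[where C="1+z"])
  fix s :: real assume "s > 0"
  then show "\<bar>z / (z + s) / s\<bar> \<le> (1 + z) * min (1 / s) (1 / s\<^sup>2)" using dom0 assms by blast
qed simp

lemma int_k2: "z > 0 \<Longrightarrow> integrable m (\<lambda>s. 1 / (z + s)\<^sup>2)"
  by (rule int_bound[where C="1 + 1/z\<^sup>2"]) (auto intro: dom2)

lemma k3_le: fixes z s :: real assumes "z > 0" "s > 0" shows "1 / (z + s)^3 \<le> (1 / z) * (1 / (z + s)\<^sup>2)"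
proof -
  have "z + s \<noteq> 0" using assms by linarith
  then have "1 / (z + s)^3 = (1 / (z + s)) * (1 / (z + s)\<^sup>2)" by (simp add: field_simps power2_eq_square power3_eq_cube)
  also have "\<dots> \<le> (1 / z) * (1 / (z + s)\<^sup>2)"
    using assms by (intro mult_right_mono divide_left_mono) auto
  finally show ?thesis .
qed

lemma int_k3: assumes "z > 0" shows "integrable m (\<lambda>s. 1 / (z + s)^3)"
proof (rule int_bound[where C="(1/z) * (1 + 1/z\<^sup>2)"])
  fix s :: real assume s: "s > 0"
  have "\<bar>1 / (z + s)^3\<bar> = 1 / (z + s)^3" using assms s by simp
  also have "\<dots> \<le> (1 / z) * (1 / (z + s)\<^sup>2)" by (rule k3_le[OF assms s])
  also have "\<dots> \<le> (1 / z) * ((1 + 1/z\<^sup>2) * min (1/s) (1/s\<^sup>2))"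
    using assms s by (intro mult_left_mono dom2) auto
  finally show "\<bar>1 / (z + s)^3\<bar> \<le> (1/z) * (1 + 1/z\<^sup>2) * min (1/s) (1/s\<^sup>2)" by simp
qed auto

lemma I0_deriv: assumes z: "z > 0" shows "(I0 has_real_derivative D1 z) (at z)"
proof -
  define h where "h = z / 2"
  have h: "h > 0" using z by (simp add: h_def)
  have "((\<lambda>w. \<integral>s. w / (w + s) / s \<partial>m) has_real_derivative (\<integral>s. 1 / ((z + s) * (z + s)) \<partial>m)) (at z)"
  proof (rule param_deriv[where r="z/2" and G="\<lambda>s. (1 + 1/h\<^sup>2) * min (1/s) (1/s\<^sup>2)"
      and F="\<lambda>w s. w / (w + s) / s" and Q="\<lambda>w s. 1 / ((z + s) * (w + s))"])
    show "AE s in m. s > 0" by (rule posAE)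
    show "\<And>w. w > 0 \<Longrightarrow> integrable m (\<lambda>s. w / (w + s) / s)" by (rule int_k0)
    show "(w / (w + s) / s - z / (z + s) / s) / (w - z) = 1 / ((z + s) * (w + s))"
      if "w > 0" "w \<noteq> z" "s > 0" for w s
      using that z by (intro alg1) auto
    show "((\<lambda>w. 1 / ((z + s) * (w + s))) \<longlongrightarrow> 1 / ((z + s) * (z + s))) (at z)" if "s > 0" for s
      using that z by (intro tendsto_intros) auto
    show "(\<lambda>s. 1 / ((z + s) * (w + s))) \<in> borel_measurable m" for w
      unfolding bm by measurable
    show "integrable m (\<lambda>s. (1 + 1/h\<^sup>2) * min (1/s) (1/s\<^sup>2))" using mi by simp
    show "\<bar>1 / ((z + s) * (w + s))\<bar> \<le> (1 + 1/h\<^sup>2) * min (1/s) (1/s\<^sup>2)"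
      if "dist w z < z / 2" "s > 0" for w s
    proof -
      have w: "w \<ge> h"
      proof -
        have "\<bar>w - z\<bar> < z / 2" using that(1) by (simp add: dist_real_def)
        moreover have "z - w \<le> \<bar>w - z\<bar>" by linarith
        ultimately show ?thesis unfolding h_def by linarith
      qed
      have "(z + s) * (w + s) > 0" using w h that z by (intro mult_pos_pos) auto
      then have "\<bar>1 / ((z + s) * (w + s))\<bar> = 1 / ((z + s) * (w + s))" by simp
      also have "\<dots> \<le> 1 / ((h + s) * (h + s))"
        using w h that z by (intro divide_left_mono mult_mono) (auto simp: h_def)
      also have "\<dots> \<le> (1 + 1/h\<^sup>2) * min (1/s) (1/s\<^sup>2)"
        using dom2[OF h that(2)] by (simp add: power2_eq_square)
      finally show ?thesis .
    qed
  qed (use z in auto)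
  moreover have "(\<integral>s. 1 / ((z + s) * (z + s)) \<partial>m) = D1 z"
    unfolding D1_def by (simp add: power2_eq_square)
  ultimately show ?thesis unfolding I0_def[abs_def] by simp
qed

lemma D1_deriv: assumes z: "z > 0" shows "(D1 has_real_derivative - (2 * D2 z)) (at z)"
proof -
  define h where "h = z / 2"
  have h: "h > 0" using z by (simp add: h_def)
  define Q where "Q w s = - (z + w + 2 * s) / ((w + s)\<^sup>2 * (z + s)\<^sup>2)" for w s
  have "((\<lambda>w. \<integral>s. 1 / (w + s)\<^sup>2 \<partial>m) has_real_derivative (\<integral>s. Q z s \<partial>m)) (at z)"
  proof (rule param_deriv[where r="z/2" and G="\<lambda>s. (2 / h) * ((1 + 1/h\<^sup>2) * min (1/s) (1/s\<^sup>2))"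
      and F="\<lambda>w s. 1 / (w + s)\<^sup>2" and Q=Q])
    show "AE s in m. s > 0" by (rule posAE)
    show "\<And>w. w > 0 \<Longrightarrow> integrable m (\<lambda>s. 1 / (w + s)\<^sup>2)" by (rule int_k2)
    show "(1 / (w + s)\<^sup>2 - 1 / (z + s)\<^sup>2) / (w - z) = Q w s"
      if "w > 0" "w \<noteq> z" "s > 0" for w s
      using that z unfolding Q_def by (intro alg2) auto
    show "((\<lambda>w. Q w s) \<longlongrightarrow> Q z s) (at z)" if "s > 0" for s
      using that z unfolding Q_def by (intro tendsto_intros) auto
    show "Q w \<in> borel_measurable m" for w
      unfolding bm Q_def by measurable
    show "integrable m (\<lambda>s. (2 / h) * ((1 + 1/h\<^sup>2) * min (1/s) (1/s\<^sup>2)))" using mi by simp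
    show "\<bar>Q w s\<bar> \<le> (2 / h) * ((1 + 1/h\<^sup>2) * min (1/s) (1/s\<^sup>2))"
      if "dist w z < z / 2" "s > 0" for w s
    proof -
      have w: "w \<ge> h"
      proof -
        have "\<bar>w - z\<bar> < z / 2" using that(1) by (simp add: dist_real_def)
        moreover have "z - w \<le> \<bar>w - z\<bar>" by linarith
        ultimately show ?thesis unfolding h_def by linarith
      qed
      have "\<bar>Q w s\<bar> = ((w + s) + (z + s)) / ((w + s)\<^sup>2 * (z + s)\<^sup>2)"
        using w h that z unfolding Q_def by (simp add: abs_divide algebra_simps)
      also have "\<dots> \<le> (2 / h) * (1 / (h + s)\<^sup>2)"
        using w h that z by (intro dom3) (auto simp: h_def)
      also have "\<dots> \<le> (2 / h) * ((1 + 1/h\<^sup>2) * min (1/s) (1/s\<^sup>2))"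
        using h that by (intro mult_left_mono dom2) auto
      finally show ?thesis .
    qed
  qed (use z in auto)
  moreover have "(\<integral>s. Q z s \<partial>m) = - (2 * D2 z)"
  proof -
    have "(\<integral>s. Q z s \<partial>m) = (\<integral>s. - (2 * (1 / (z + s)^3)) \<partial>m)"
    proof (rule integral_cong_AE)
      show "Q z \<in> borel_measurable m" unfolding bm Q_def by measurable
      show "(\<lambda>s. - (2 * (1 / (z + s)^3))) \<in> borel_measurable m" unfolding bm by measurable
      show "AE s in m. Q z s = - (2 * (1 / (z + s)^3))"
        using posAE
      proof eventually_elim
        case (elim s)
        have "z + z + 2 * s = (z + s) + (z + s)" by simp
        then show ?case unfolding Q_def using alg3[of "z + s"] z elim by simp
      qed
    qed
    also have "\<dots> = - (2 * D2 z)" unfolding D2_def by (simp only: integral_minus integral_mult_right_zero)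
    finally show ?thesis .
  qed
  ultimately show ?thesis unfolding D1_def[abs_def] by simp
qed

lemma D1_nonneg: "D1 z \<ge> 0" unfolding D1_def by (intro integral_nonneg_AE) auto

lemma D2_nonneg: "z > 0 \<Longrightarrow> D2 z \<ge> 0" unfolding D2_def
  by (intro integral_nonneg_AE, use posAE in eventually_elim) auto

lemma zD2_le: assumes "z > 0" shows "z * D2 z \<le> D1 z"
proof -
  have "z * D2 z = (\<integral>s. z * (1 / (z + s)^3) \<partial>m)" unfolding D2_def by (rule integral_mult_right_zero[symmetric])
  also have "\<dots> \<le> D1 z" unfolding D1_def
  proof (rule integral_mono_AE)
    show "integrable m (\<lambda>s. z * (1 / (z + s)^3))" by (rule integrable_mult_right[OF int_k3[OF assms]])
    show "integrable m (\<lambda>s. 1 / (z + s)\<^sup>2)" using int_k2[OF assms] .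
    show "AE s in m. z * (1 / (z + s)^3) \<le> 1 / (z + s)\<^sup>2"
      using posAE
    proof eventually_elim
      case (elim s)
      have "z * (1 / (z + s)^3) \<le> z * ((1 / z) * (1 / (z + s)\<^sup>2))"
        using k3_le[OF assms elim] assms by (intro mult_left_mono) auto
      also have "\<dots> = 1 / (z + s)\<^sup>2" using assms by simp
      finally show ?case .
    qed
  qed
  finally show ?thesis .
qed

lemma degenerate:
  assumes "z0 > 0" "D1 z0 = 0"
  shows "AE s in m. False"
proof -
  have "AE s in m. 1 / (z0 + s)\<^sup>2 = 0"
    using assms(2) unfolding D1_def
    by (subst (asm) integral_nonneg_eq_0_iff_AE) (use int_k2[OF assms(1)] in auto)
  with posAE show ?thesis
    by eventually_elim (use assms(1) in auto)
qed

lemma degenerate_int: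
  assumes "AE s in m. False" "f \<in> borel_measurable borel"
  shows "(\<integral>s. f s \<partial>m) = 0"
proof -
  have "(\<integral>s. f s \<partial>m) = (\<integral>s. 0 \<partial>m)"
    by (rule integral_cong_AE) (use assms bm in \<open>auto elim: AE_mp\<close>)
  then show ?thesis by simp
qed

end

lemma powr_ratio: fixes x a b :: real assumes "x > 0" "a > 0"
  shows "(x / a) powr (- b) = a powr b / x powr b"
  using assms by (simp add: powr_minus powr_divide)

lemma h_deriv:
  fixes p d :: "real \<Rightarrow> real"
  assumes "x > 0" "(p has_real_derivative - d x) (at x)"
  shows "((\<lambda>x. p x * x powr b) has_real_derivative x powr b * (b * p x - x * d x) / x) (at x)"
proof -
  have "((\<lambda>x. p x * x powr b) has_real_derivative (- d x) * x powr b + (b * x powr (b - 1)) * p x) (at x)"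
    using assms by (intro DERIV_mult) (auto intro!: derivative_eq_intros)
  moreover have "(- d x) * x powr b + (b * x powr (b - 1)) * p x = x powr b * (b * p x - x * d x) / x"
    using assms by (simp add: powr_diff field_simps)
  ultimately show ?thesis by simp
qed

lemma E_deriv:
  fixes \<psi> p :: "real \<Rightarrow> real"
  assumes "x > 0" "a > 0" "(\<psi> has_real_derivative p x) (at x)"
  shows "((\<lambda>x. \<psi> x - \<psi> a - p a * a * Qf b (x / a)) has_real_derivative p x - p a * (x / a) powr (- b)) (at x)"
proof -
  have q: "((\<lambda>x. Qf b (x / a)) has_real_derivative (x / a) powr (- b) * (1 / a)) (at x)"
  proof (rule DERIV_chain2[where f="Qf b" and g="\<lambda>x. x / a"])
    show "(Qf b has_real_derivative (x / a) powr (- b)) (at (x / a))"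
      using assms by (intro Qf_deriv) auto
    show "((\<lambda>x. x / a) has_real_derivative 1 / a) (at x)"
      using assms by (auto intro!: derivative_eq_intros)
  qed
  have "((\<lambda>x. \<psi> x - \<psi> a - p a * a * Qf b (x / a)) has_real_derivative p x - 0 - p a * a * ((x / a) powr (- b) * (1 / a))) (at x)"
    by (intro DERIV_diff DERIV_cmult q assms(3) DERIV_const)
  then show ?thesis using assms by simp
qed

lemma cmp_upper:
  fixes \<psi> p d :: "real \<Rightarrow> real"
  assumes a: "a > 0"
    and d\<psi>: "\<And>z. z > 0 \<Longrightarrow> (\<psi> has_real_derivative p z) (at z)"
    and dp: "\<And>z. z > 0 \<Longrightarrow> (p has_real_derivative - d z) (at z)"
    and bnd: "\<And>z. z > 0 \<Longrightarrow> z * d z \<le> b * p z"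
    and x: "x > 0"
  shows "p a * a * Qf b (x / a) \<le> \<psi> x - \<psi> a"
proof -
  have hmono: "p u * u powr b \<le> p v * v powr b" if "0 < u" "u \<le> v" for u v
  proof (rule DERIV_nonneg_imp_nondecreasing[of u v "\<lambda>x. p x * x powr b"])
    show "u \<le> v" by fact
    fix y assume "u \<le> y" "y \<le> v"
    then have y: "y > 0" using that by simp
    show "\<exists>D. ((\<lambda>x. p x * x powr b) has_real_derivative D) (at y) \<and> D \<ge> 0"
      using h_deriv[of y p d b, OF y dp[OF y]] bnd[OF y] y
      by (intro exI conjI) (auto intro!: divide_nonneg_pos mult_nonneg_nonneg)
  qed
  have "0 \<le> \<psi> x - \<psi> a - p a * a * Qf b (x / a)"
  proof (rule valley[of a "\<lambda>x. \<psi> x - \<psi> a - p a * a * Qf b (x / a)" "\<lambda>x. p x - p a * (x / a) powr (- b)" x])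
    show "a > 0" by fact
    show "\<psi> a - \<psi> a - p a * a * Qf b (a / a) = 0" using a by simp
    fix y :: real
    show "y > 0 \<Longrightarrow> ((\<lambda>x. \<psi> x - \<psi> a - p a * a * Qf b (x / a)) has_real_derivative p y - p a * (y / a) powr (- b)) (at y)"
      using a d\<psi> by (intro E_deriv) auto
  next
    fix y :: real assume y: "0 < y" "y \<le> a"
    have "p y * y powr b \<le> p a * a powr b" using hmono[OF y] .
    then have "p y \<le> p a * a powr b / y powr b" using y by (simp add: field_simps)
    then show "p y - p a * (y / a) powr (- b) \<le> 0" using y a by (simp add: powr_ratio)
  next
    fix y :: real assume y: "a \<le> y"
    have "p a * a powr b \<le> p y * y powr b" using hmono[OF a y] .
    then have "p a * a powr b / y powr b \<le> p y" using y a by (simp add: field_simps)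
    then show "p y - p a * (y / a) powr (- b) \<ge> 0" using y a by (simp add: powr_ratio)
  qed (use x in auto)
  then show ?thesis by simp
qed

lemma cmp_lower:
  fixes \<psi> p d :: "real \<Rightarrow> real"
  assumes a: "a > 0"
    and d\<psi>: "\<And>z. z > 0 \<Longrightarrow> (\<psi> has_real_derivative p z) (at z)"
    and dp: "\<And>z. z > 0 \<Longrightarrow> (p has_real_derivative - d z) (at z)"
    and bnd: "\<And>z. z > 0 \<Longrightarrow> b * p z \<le> z * d z"
    and x: "x > 0"
  shows "\<psi> x - \<psi> a \<le> p a * a * Qf b (x / a)"
proof -
  have hmono: "p v * v powr b \<le> p u * u powr b" if "0 < u" "u \<le> v" for u v
  proof (rule DERIV_nonpos_imp_nonincreasing[of u v "\<lambda>x. p x * x powr b"])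
    show "u \<le> v" by fact
    fix y assume "u \<le> y" "y \<le> v"
    then have y: "y > 0" using that by simp
    show "\<exists>D. ((\<lambda>x. p x * x powr b) has_real_derivative D) (at y) \<and> D \<le> 0"
      using h_deriv[of y p d b, OF y dp[OF y]] bnd[OF y] y
      by (intro exI conjI) (auto intro!: divide_nonpos_pos mult_nonneg_nonpos)
  qed
  have "0 \<le> - (\<psi> x - \<psi> a - p a * a * Qf b (x / a))"
  proof (rule valley[of a "\<lambda>x. - (\<psi> x - \<psi> a - p a * a * Qf b (x / a))" "\<lambda>x. - (p x - p a * (x / a) powr (- b))" x])
    show "a > 0" by fact
    show "- (\<psi> a - \<psi> a - p a * a * Qf b (a / a)) = 0" using a by simp
    fix y :: real
    show "y > 0 \<Longrightarrow> ((\<lambda>x. - (\<psi> x - \<psi> a - p a * a * Qf b (x / a))) has_real_derivative - (p y - p a * (y / a) powr (- b))) (at y)"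
      using a d\<psi> by (intro DERIV_minus E_deriv) auto
  next
    fix y :: real assume y: "0 < y" "y \<le> a"
    have "p a * a powr b \<le> p y * y powr b" using hmono[OF y] .
    then have "p a * a powr b / y powr b \<le> p y" using y by (simp add: field_simps)
    then show "- (p y - p a * (y / a) powr (- b)) \<le> 0" using y a by (simp add: powr_ratio)
  next
    fix y :: real assume y: "a \<le> y"
    have "p y * y powr b \<le> p a * a powr b" using hmono[OF a y] .
    then have "p y \<le> p a * a powr b / y powr b" using y a by (simp add: field_simps)
    then show "- (p y - p a * (y / a) powr (- b)) \<ge> 0" using y a by (simp add: powr_ratio)
  qed (use x in auto)
  then show ?thesis by simp
qed

definition Fpsi :: "(real \<Rightarrow> real) \<Rightarrow> (real \<Rightarrow> real) \<Rightarrow> real \<Rightarrow> real \<Rightarrow> real" where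
  "Fpsi \<psi> p lam \<zeta> = lam / (lam\<^sup>2 - \<zeta>\<^sup>2) * ln (p (lam\<^sup>2) * (lam\<^sup>2 - \<zeta>\<^sup>2) / (\<psi> (lam\<^sup>2) - \<psi> (\<zeta>\<^sup>2)))"

lemma ln_cmp:
  fixes lam u c P D :: real
  assumes "lam > 0" "c > 0" "u \<noteq> 0" "P / (c * u) > 0" "D / (c * u) > 0" "P \<le> D"
  shows "lam / u * ln (P / (c * u)) \<le> lam / u * ln (D / (c * u))"
proof (cases "u > 0")
  case True
  have "P / (c * u) \<le> D / (c * u)" using assms True by (intro divide_right_mono) auto
  then have "ln (P / (c * u)) \<le> ln (D / (c * u))" using assms by simp
  then show ?thesis using assms True by (intro mult_left_mono) auto
next
  case False
  then have u: "u < 0" using assms by simp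
  have cu: "c * u < 0" using assms u by (simp add: mult_pos_neg)
  have "D / (c * u) \<le> P / (c * u)" using assms cu
    by (intro divide_right_mono_neg) auto
  then have "ln (D / (c * u)) \<le> ln (P / (c * u))" using assms by simp
  moreover have "lam / u < 0" using assms u by (simp add: divide_pos_neg)
  ultimately show ?thesis by (intro mult_left_mono_neg) auto
qed

lemma strict_incr:
  fixes \<psi> p :: "real \<Rightarrow> real"
  assumes d\<psi>: "\<And>z. z > 0 \<Longrightarrow> (\<psi> has_real_derivative p z) (at z)"
    and ppos: "\<And>z. z > 0 \<Longrightarrow> p z > 0"
    and "0 < x" "x < y"
  shows "\<psi> x < \<psi> y"
proof (rule DERIV_pos_imp_increasing_open[of x y \<psi>])
  show "x < y" by fact
  fix z assume "x < z" "z < y"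
  then show "\<exists>D. (\<psi> has_real_derivative D) (at z) \<and> 0 < D"
    using assms by (intro exI[of _ "p z"]) auto
next
  have "\<forall>z\<in>{x..y}. isCont \<psi> z" using assms by (auto intro!: DERIV_isCont[OF d\<psi>])
  then show "continuous_on {x..y} \<psi>" by (rule continuous_at_imp_continuous_on)
qed

lemma D_ratio_pos:
  fixes \<psi> p :: "real \<Rightarrow> real"
  assumes d\<psi>: "\<And>z. z > 0 \<Longrightarrow> (\<psi> has_real_derivative p z) (at z)"
    and ppos: "\<And>z. z > 0 \<Longrightarrow> p z > 0"
    and "x > 0" "a > 0" "x \<noteq> a" "c > 0"
  shows "(\<psi> x - \<psi> a) / (c * (x - a)) > 0"
proof (cases "x < a")
  case True
  then have "\<psi> x < \<psi> a" using strict_incr[OF d\<psi> ppos] assms by auto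
  then show ?thesis using True assms by (intro divide_neg_neg) (auto simp: mult_pos_neg)
next
  case False
  then have "a < x" using assms by simp
  then have "\<psi> a < \<psi> x" using strict_incr[OF d\<psi> ppos] assms by auto
  then show ?thesis using \<open>a < x\<close> assms by (intro divide_pos_pos) auto
qed

lemma P_ratio_pos:
  assumes "x > 0" "a > 0" "x \<noteq> a" "c > 0"
  shows "(c * a * Qf b (x / a)) / (c * (x - a)) > 0"
proof -
  have y: "x / a > 0" "x / a \<noteq> 1" using assms by auto
  have "Qf b (x / a) / (x / a - 1) > 0" by (rule Qf_ratio_pos[OF y])
  moreover have "(c * a * Qf b (x / a)) / (c * (x - a)) = Qf b (x / a) / (x / a - 1)"
    using assms by (simp add: field_simps)
  ultimately show ?thesis by simp
qed

lemma Fpsi_eq: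
  fixes \<psi> p :: "real \<Rightarrow> real"
  assumes "lam > 0" "\<zeta> > 0" "\<zeta> \<noteq> lam" "p (lam\<^sup>2) > 0"
    and pos: "(\<psi> (\<zeta>\<^sup>2) - \<psi> (lam\<^sup>2)) / (p (lam\<^sup>2) * (\<zeta>\<^sup>2 - lam\<^sup>2)) > 0"
  shows "Fpsi \<psi> p lam \<zeta> = lam / (\<zeta>\<^sup>2 - lam\<^sup>2) * ln ((\<psi> (\<zeta>\<^sup>2) - \<psi> (lam\<^sup>2)) / (p (lam\<^sup>2) * (\<zeta>\<^sup>2 - lam\<^sup>2)))"
proof -
  define y where "y = (\<psi> (\<zeta>\<^sup>2) - \<psi> (lam\<^sup>2)) / (p (lam\<^sup>2) * (\<zeta>\<^sup>2 - lam\<^sup>2))"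
  have e1: "p (lam\<^sup>2) * (lam\<^sup>2 - \<zeta>\<^sup>2) = - (p (lam\<^sup>2) * (\<zeta>\<^sup>2 - lam\<^sup>2))" by (simp add: algebra_simps)
  have e2: "\<psi> (lam\<^sup>2) - \<psi> (\<zeta>\<^sup>2) = - (\<psi> (\<zeta>\<^sup>2) - \<psi> (lam\<^sup>2))" by simp
  have "p (lam\<^sup>2) * (lam\<^sup>2 - \<zeta>\<^sup>2) / (\<psi> (lam\<^sup>2) - \<psi> (\<zeta>\<^sup>2)) = inverse y"
    unfolding y_def e1 e2 minus_divide_divide by (simp add: inverse_divide)
  then have "ln (p (lam\<^sup>2) * (lam\<^sup>2 - \<zeta>\<^sup>2) / (\<psi> (lam\<^sup>2) - \<psi> (\<zeta>\<^sup>2))) = ln (inverse y)"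
    by (simp only:)
  also have "\<dots> = - ln y" by (rule ln_inverse)
  finally have "ln (p (lam\<^sup>2) * (lam\<^sup>2 - \<zeta>\<^sup>2) / (\<psi> (lam\<^sup>2) - \<psi> (\<zeta>\<^sup>2))) = - ln y" .
  moreover have "lam / (lam\<^sup>2 - \<zeta>\<^sup>2) = - (lam / (\<zeta>\<^sup>2 - lam\<^sup>2))"
    by (simp add: minus_divide_right)
  ultimately show ?thesis unfolding Fpsi_def y_def by simp
qed

lemma Kf_eq:
  fixes c :: real
  assumes "lam > 0" "\<zeta> > 0" "\<zeta> \<noteq> lam" "c > 0"
  shows "Kf b (\<zeta> / lam) / lam = lam / (\<zeta>\<^sup>2 - lam\<^sup>2) * ln ((c * lam\<^sup>2 * Qf b (\<zeta>\<^sup>2 / lam\<^sup>2)) / (c * (\<zeta>\<^sup>2 - lam\<^sup>2)))"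
proof -
  have ne: "\<zeta>\<^sup>2 - lam\<^sup>2 \<noteq> 0" using assms by (auto simp: power2_eq_iff)
  have t2: "(\<zeta> / lam)\<^sup>2 = \<zeta>\<^sup>2 / lam\<^sup>2" by (simp add: power_divide)
  have e1: "Qf b (\<zeta>\<^sup>2 / lam\<^sup>2) / (\<zeta>\<^sup>2 / lam\<^sup>2 - 1) = (c * lam\<^sup>2 * Qf b (\<zeta>\<^sup>2 / lam\<^sup>2)) / (c * (\<zeta>\<^sup>2 - lam\<^sup>2))"
    using assms ne by (simp add: field_simps)
  have e2: "1 / (\<zeta>\<^sup>2 / lam\<^sup>2 - 1) / lam = lam / (\<zeta>\<^sup>2 - lam\<^sup>2)"
    using assms ne by (simp add: field_simps power2_eq_square)
  have "Kf b (\<zeta> / lam) / lam = (1 / (\<zeta>\<^sup>2 / lam\<^sup>2 - 1) / lam) * ln (Qf b (\<zeta>\<^sup>2 / lam\<^sup>2) / (\<zeta>\<^sup>2 / lam\<^sup>2 - 1))"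
    unfolding Kf_def t2 by simp
  then show ?thesis by (simp only: e1 e2)
qed

lemma Fpsi_ge:
  fixes \<psi> p d :: "real \<Rightarrow> real"
  assumes lam: "lam > 0"
    and d\<psi>: "\<And>z. z > 0 \<Longrightarrow> (\<psi> has_real_derivative p z) (at z)"
    and dp: "\<And>z. z > 0 \<Longrightarrow> (p has_real_derivative - d z) (at z)"
    and ppos: "\<And>z. z > 0 \<Longrightarrow> p z > 0"
    and bnd: "\<And>z. z > 0 \<Longrightarrow> z * d z \<le> b * p z"
    and z: "\<zeta> > 0" "\<zeta> \<noteq> lam"
  shows "Kf b (\<zeta> / lam) / lam \<le> Fpsi \<psi> p lam \<zeta>"
proof -
  have a: "lam\<^sup>2 > 0" using lam by simp
  have x: "\<zeta>\<^sup>2 > 0" "\<zeta>\<^sup>2 \<noteq> lam\<^sup>2" using z lam by (auto simp: power2_eq_iff)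
  have c: "p (lam\<^sup>2) > 0" using ppos a by simp
  have Dp: "(\<psi> (\<zeta>\<^sup>2) - \<psi> (lam\<^sup>2)) / (p (lam\<^sup>2) * (\<zeta>\<^sup>2 - lam\<^sup>2)) > 0"
    by (rule D_ratio_pos[OF d\<psi> ppos x(1) a x(2) c])
  have Pp: "(p (lam\<^sup>2) * lam\<^sup>2 * Qf b (\<zeta>\<^sup>2 / lam\<^sup>2)) / (p (lam\<^sup>2) * (\<zeta>\<^sup>2 - lam\<^sup>2)) > 0"
    by (rule P_ratio_pos[OF x(1) a x(2) c])
  have le: "p (lam\<^sup>2) * lam\<^sup>2 * Qf b (\<zeta>\<^sup>2 / lam\<^sup>2) \<le> \<psi> (\<zeta>\<^sup>2) - \<psi> (lam\<^sup>2)"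
    by (rule cmp_upper[OF a d\<psi> dp bnd x(1)])
  show ?thesis
    unfolding Kf_eq[OF lam z c] Fpsi_eq[where \<psi>=\<psi> and p=p and lam=lam and \<zeta>=\<zeta>, OF lam z c Dp]
    by (rule ln_cmp[OF lam c _ Pp Dp le]) (use x in simp)
qed

lemma Fpsi_le:
  fixes \<psi> p d :: "real \<Rightarrow> real"
  assumes lam: "lam > 0"
    and d\<psi>: "\<And>z. z > 0 \<Longrightarrow> (\<psi> has_real_derivative p z) (at z)"
    and dp: "\<And>z. z > 0 \<Longrightarrow> (p has_real_derivative - d z) (at z)"
    and ppos: "\<And>z. z > 0 \<Longrightarrow> p z > 0"
    and bnd: "\<And>z. z > 0 \<Longrightarrow> b * p z \<le> z * d z"
    and z: "\<zeta> > 0" "\<zeta> \<noteq> lam"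
  shows "Fpsi \<psi> p lam \<zeta> \<le> Kf b (\<zeta> / lam) / lam"
proof -
  have a: "lam\<^sup>2 > 0" using lam by simp
  have x: "\<zeta>\<^sup>2 > 0" "\<zeta>\<^sup>2 \<noteq> lam\<^sup>2" using z lam by (auto simp: power2_eq_iff)
  have c: "p (lam\<^sup>2) > 0" using ppos a by simp
  have Dp: "(\<psi> (\<zeta>\<^sup>2) - \<psi> (lam\<^sup>2)) / (p (lam\<^sup>2) * (\<zeta>\<^sup>2 - lam\<^sup>2)) > 0"
    by (rule D_ratio_pos[OF d\<psi> ppos x(1) a x(2) c])
  have Pp: "(p (lam\<^sup>2) * lam\<^sup>2 * Qf b (\<zeta>\<^sup>2 / lam\<^sup>2)) / (p (lam\<^sup>2) * (\<zeta>\<^sup>2 - lam\<^sup>2)) > 0"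
    by (rule P_ratio_pos[OF x(1) a x(2) c])
  have le: "\<psi> (\<zeta>\<^sup>2) - \<psi> (lam\<^sup>2) \<le> p (lam\<^sup>2) * lam\<^sup>2 * Qf b (\<zeta>\<^sup>2 / lam\<^sup>2)"
    by (rule cmp_lower[OF a d\<psi> dp bnd x(1)])
  show ?thesis
    unfolding Kf_eq[OF lam z c] Fpsi_eq[where \<psi>=\<psi> and p=p and lam=lam and \<zeta>=\<zeta>, OF lam z c Dp]
    by (rule ln_cmp[OF lam c _ Dp Pp le]) (use x in simp)
qed

lemma Kf_scaled:
  assumes "b \<ge> 0" "lam > 0"
  shows "integrable lborel (\<lambda>\<zeta>. indicator {0<..} \<zeta> * (Kf b (\<zeta> / lam) / lam))"
    "(\<integral>\<zeta>. indicator {0<..} \<zeta> * (Kf b (\<zeta> / lam) / lam) \<partial>lborel) = - (b * pi^2 / 4)"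
proof -
  define f where "f \<zeta> = indicator {0<..} \<zeta> * (Kf b (\<zeta> / lam) / lam)" for \<zeta> :: real
  have fx: "f (0 + lam * x) = indicator {0<..} x * Kf b x / lam" for x
    using assms by (simp add: f_def indicator_def zero_less_mult_iff)
  have i: "integrable lborel (\<lambda>x. indicator {0<..} x * Kf b x / lam)"
    using Kf_total(1)[OF assms(1)] by simp
  have "integrable lborel f"
    using lborel_integrable_real_affine_iff[of lam f 0] i assms unfolding fx by simp
  then show "integrable lborel (\<lambda>\<zeta>. indicator {0<..} \<zeta> * (Kf b (\<zeta> / lam) / lam))"
    unfolding f_def .
  have "(\<integral>\<zeta>. f \<zeta> \<partial>lborel) = \<bar>lam\<bar> *\<^sub>R (\<integral>x. f (0 + lam * x) \<partial>lborel)"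
    using assms by (intro lborel_integral_real_affine) auto
  also have "\<dots> = lam * ((\<integral>x. indicator {0<..} x * Kf b x \<partial>lborel) / lam)"
    unfolding fx using assms by simp
  also have "\<dots> = - (b * pi^2 / 4)" using Kf_total(2)[OF assms(1)] assms by simp
  finally show "(\<integral>\<zeta>. indicator {0<..} \<zeta> * (Kf b (\<zeta> / lam) / lam) \<partial>lborel) = - (b * pi^2 / 4)"
    by (simp add: f_def)
qed

lemma Fpsi_measurable:
  fixes \<psi> p :: "real \<Rightarrow> real"
  assumes d\<psi>: "\<And>z. z > 0 \<Longrightarrow> (\<psi> has_real_derivative p z) (at z)" and lam: "lam > 0"
  shows "(\<lambda>\<zeta>. indicator {0<..} \<zeta> * Fpsi \<psi> p lam \<zeta>) \<in> borel_measurable lborel"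
proof -
  define \<psi>' where "\<psi>' x = (if x \<in> {0<..} then \<psi> x else 0)" for x :: real
  have c: "continuous_on {0<..} \<psi>"
    using d\<psi> by (intro continuous_at_imp_continuous_on) (auto intro: DERIV_isCont)
  have m: "\<psi>' \<in> borel_measurable borel" unfolding \<psi>'_def
    by (rule borel_measurable_continuous_on_if) (use c in auto)
  have m2: "(\<lambda>\<zeta>. \<psi>' (\<zeta>\<^sup>2)) \<in> borel_measurable borel"
    by (rule measurable_compose[OF _ m]) simp
  have eq: "indicator {0<..} \<zeta> * Fpsi \<psi> p lam \<zeta> = indicator {0<..} \<zeta> *
      (lam / (lam\<^sup>2 - \<zeta>\<^sup>2) * ln (p (lam\<^sup>2) * (lam\<^sup>2 - \<zeta>\<^sup>2) / (\<psi>' (lam\<^sup>2) - \<psi>' (\<zeta>\<^sup>2))))" for \<zeta>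
    using lam by (auto simp: indicator_def Fpsi_def \<psi>'_def)
  show ?thesis unfolding eq using m2 by measurable
qed

lemma main_integral:
  fixes \<psi> p d :: "real \<Rightarrow> real"
  assumes lam: "lam > 0"
    and d\<psi>: "\<And>z. z > 0 \<Longrightarrow> (\<psi> has_real_derivative p z) (at z)"
    and dp: "\<And>z. z > 0 \<Longrightarrow> (p has_real_derivative - d z) (at z)"
    and ppos: "\<And>z. z > 0 \<Longrightarrow> p z > 0"
    and dnn: "\<And>z. z > 0 \<Longrightarrow> d z \<ge> 0"
    and two: "\<And>z. z > 0 \<Longrightarrow> z * d z \<le> 2 * p z"
  shows "integrable lborel (\<lambda>\<zeta>. indicator {0<..} \<zeta> * Fpsi \<psi> p lam \<zeta>)"
    and "\<And>b. b \<ge> 0 \<Longrightarrow> (\<And>z. z > 0 \<Longrightarrow> z * d z \<le> b * p z) \<Longrightarrow>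
           - (b * pi^2 / 4) \<le> (\<integral>\<zeta>. indicator {0<..} \<zeta> * Fpsi \<psi> p lam \<zeta> \<partial>lborel)"
    and "\<And>b. b \<ge> 0 \<Longrightarrow> (\<And>z. z > 0 \<Longrightarrow> b * p z \<le> z * d z) \<Longrightarrow>
           (\<integral>\<zeta>. indicator {0<..} \<zeta> * Fpsi \<psi> p lam \<zeta> \<partial>lborel) \<le> - (b * pi^2 / 4)"
proof -
  have M: "(\<lambda>\<zeta>. indicator {0<..} \<zeta> * Fpsi \<psi> p lam \<zeta>) \<in> borel_measurable lborel"
    by (rule Fpsi_measurable[OF d\<psi> lam])
  have ae: "AE \<zeta> in lborel. \<zeta> \<noteq> lam" by (rule AE_lborel_singleton)
  have I2: "integrable lborel (\<lambda>\<zeta>. indicator {0<..} \<zeta> * (Kf 2 (\<zeta> / lam) / lam))"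
    using Kf_scaled[of 2 lam] lam by simp
  show I: "integrable lborel (\<lambda>\<zeta>. indicator {0<..} \<zeta> * Fpsi \<psi> p lam \<zeta>)"
  proof (rule Bochner_Integration.integrable_bound[OF I2 M])
    show "AE \<zeta> in lborel. norm (indicator {0<..} \<zeta> * Fpsi \<psi> p lam \<zeta>) \<le> norm (indicator {0<..} \<zeta> * (Kf 2 (\<zeta> / lam) / lam))"
      using ae
    proof eventually_elim
      case (elim \<zeta>)
      show ?case
      proof (cases "\<zeta> > 0")
        case True
        have lo: "Kf 2 (\<zeta> / lam) / lam \<le> Fpsi \<psi> p lam \<zeta>"
          by (rule Fpsi_ge[OF lam d\<psi> dp ppos two True elim])
        have "Fpsi \<psi> p lam \<zeta> \<le> Kf 0 (\<zeta> / lam) / lam"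
          by (rule Fpsi_le[OF lam d\<psi> dp ppos _ True elim]) (use dnn in auto)
        also have "Kf 0 (\<zeta> / lam) \<le> 0"
          using True elim lam by (intro Kf_nonpos) (auto simp: field_simps)
        then have "Kf 0 (\<zeta> / lam) / lam \<le> 0" using lam by (simp add: divide_nonpos_pos)
        finally have up: "Fpsi \<psi> p lam \<zeta> \<le> 0" .
        have "norm (indicator {0<..} \<zeta> * Fpsi \<psi> p lam \<zeta>) = - Fpsi \<psi> p lam \<zeta>"
          using True up by simp
        moreover have "- (Kf 2 (\<zeta> / lam) / lam) \<le> norm (indicator {0<..} \<zeta> * (Kf 2 (\<zeta> / lam) / lam))"
          using True abs_ge_minus_self[of "Kf 2 (\<zeta> / lam) / lam"] by (simp del: abs_divide)
        ultimately show ?thesis using lo by linarith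
      qed simp
    qed
  qed
  show "- (b * pi^2 / 4) \<le> (\<integral>\<zeta>. indicator {0<..} \<zeta> * Fpsi \<psi> p lam \<zeta> \<partial>lborel)"
    if b: "b \<ge> 0" and bb: "\<And>z. z > 0 \<Longrightarrow> z * d z \<le> b * p z" for b
  proof -
    have "- (b * pi^2 / 4) = (\<integral>\<zeta>. indicator {0<..} \<zeta> * (Kf b (\<zeta> / lam) / lam) \<partial>lborel)"
      using Kf_scaled(2)[OF b lam] by simp
    also have "\<dots> \<le> (\<integral>\<zeta>. indicator {0<..} \<zeta> * Fpsi \<psi> p lam \<zeta> \<partial>lborel)"
    proof (rule integral_mono_AE[OF Kf_scaled(1)[OF b lam] I])
      show "AE \<zeta> in lborel. indicator {0<..} \<zeta> * (Kf b (\<zeta> / lam) / lam) \<le> indicator {0<..} \<zeta> * Fpsi \<psi> p lam \<zeta>"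
        using ae
      proof eventually_elim
        case (elim \<zeta>)
        show ?case
          by (cases "\<zeta> > 0") (auto intro: Fpsi_ge[OF lam d\<psi> dp ppos bb _ elim])
      qed
    qed
    finally show ?thesis .
  qed
  show "(\<integral>\<zeta>. indicator {0<..} \<zeta> * Fpsi \<psi> p lam \<zeta> \<partial>lborel) \<le> - (b * pi^2 / 4)"
    if b: "b \<ge> 0" and bb: "\<And>z. z > 0 \<Longrightarrow> b * p z \<le> z * d z" for b
  proof -
    have "(\<integral>\<zeta>. indicator {0<..} \<zeta> * Fpsi \<psi> p lam \<zeta> \<partial>lborel) \<le> (\<integral>\<zeta>. indicator {0<..} \<zeta> * (Kf b (\<zeta> / lam) / lam) \<partial>lborel)"
    proof (rule integral_mono_AE[OF I Kf_scaled(1)[OF b lam]])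
      show "AE \<zeta> in lborel. indicator {0<..} \<zeta> * Fpsi \<psi> p lam \<zeta> \<le> indicator {0<..} \<zeta> * (Kf b (\<zeta> / lam) / lam)"
        using ae
      proof eventually_elim
        case (elim \<zeta>)
        show ?case
          by (cases "\<zeta> > 0") (auto intro: Fpsi_le[OF lam d\<psi> dp ppos bb _ elim])
      qed
    qed
    also have "\<dots> = - (b * pi^2 / 4)" using Kf_scaled(2)[OF b lam] by simp
    finally show ?thesis .
  qed
qed

theorem proposition4p3:
  fixes \<psi> :: "real \<Rightarrow> real" and lam :: real
  assumes "complete_bernstein \<psi>"
    and "\<exists>z>0. \<psi> z \<noteq> 0"
    and "lam > 0"
  shows "(INF \<xi>\<in>{0<..}. ereal (\<xi> * \<bar>deriv (deriv \<psi>) \<xi>\<bar> / deriv \<psi> \<xi>)) * ereal (pi / 4)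
           \<le> ereal (vartheta \<psi> lam) \<and>
         ereal (vartheta \<psi> lam)
           \<le> (SUP \<xi>\<in>{0<..}. ereal (\<xi> * \<bar>deriv (deriv \<psi>) \<xi>\<bar> / deriv \<psi> \<xi>)) * ereal (pi / 4)"
proof -
  obtain c1 c2 and m :: "real measure" where c1: "c1 \<ge> 0" and c2: "c2 \<ge> 0"
    and sm: "sets m = sets borel" and m0: "emeasure m {..0} = 0"
    and mi: "integrable m (\<lambda>s. min (1 / s) (1 / s\<^sup>2))"
    and \<psi>eq: "\<And>z. z > 0 \<Longrightarrow> \<psi> z = c1 + c2 * z + (1 / pi) * (\<integral>s. z / (z + s) / s \<partial>m)"
    using assms(1) unfolding complete_bernstein_def by blast
  have lam: "lam > 0" by fact
  define p where "p z = c2 + D1 m z / pi" for z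
  define d where "d z = 2 * D2 m z / pi" for z
  have d\<psi>: "(\<psi> has_real_derivative p z) (at z)" if z: "z > 0" for z
  proof -
    have "((\<lambda>z. c1 + c2 * z + (1 / pi) * I0 m z) has_real_derivative 0 + c2 * 1 + (1 / pi) * D1 m z) (at z)"
      by (intro DERIV_add DERIV_const DERIV_cmult DERIV_ident I0_deriv[OF sm m0 mi z])
    then have "((\<lambda>z. c1 + c2 * z + (1 / pi) * I0 m z) has_real_derivative p z) (at z)"
      by (simp add: p_def)
    then show ?thesis
    proof (rule has_field_derivative_transform_within_open[where S="{0<..}"])
      show "open ({0<..}::real set)" by simp
      show "z \<in> {0<..}" using z by simp
      fix x :: real assume "x \<in> {0<..}"
      then show "c1 + c2 * x + 1 / pi * I0 m x = \<psi> x" using \<psi>eq[of x] by (simp add: I0_def[OF sm m0 mi])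
    qed
  qed
  have dp: "(p has_real_derivative - d z) (at z)" if z: "z > 0" for z
  proof -
    have "((\<lambda>z. c2 + D1 m z / pi) has_real_derivative 0 + - (2 * D2 m z) / pi) (at z)"
      by (intro DERIV_add DERIV_const DERIV_cdivide D1_deriv[OF sm m0 mi z])
    then show ?thesis by (simp add: p_def[abs_def] d_def)
  qed
  have deriv1: "deriv \<psi> z = p z" if "z > 0" for z
    using d\<psi>[OF that] by (rule DERIV_imp_deriv)
  have deriv2: "deriv (deriv \<psi>) z = - d z" if z: "z > 0" for z
  proof -
    have "(deriv \<psi> has_real_derivative - d z) (at z)"
    proof (rule has_field_derivative_transform_within_open[where S="{0<..}", OF dp[OF z]])
      show "open ({0<..}::real set)" by simp
      show "z \<in> {0<..}" using z by simp
      fix x :: real assume "x \<in> {0<..}"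
      then show "p x = deriv \<psi> x" using deriv1[of x] by simp
    qed
    then show ?thesis by (rule DERIV_imp_deriv)
  qed
  have dnn: "d z \<ge> 0" if "z > 0" for z
    using D2_nonneg[OF sm m0 mi that] by (simp add: d_def)
  have pnn: "p z \<ge> 0" for z
    using D1_nonneg[OF sm m0 mi, of z] c2 by (simp add: p_def)
  have two: "z * d z \<le> 2 * p z" if z: "z > 0" for z
  proof -
    have "z * D2 m z \<le> D1 m z" by (rule zD2_le[OF sm m0 mi z])
    then have "z * d z \<le> 2 * (D1 m z / pi)" by (simp add: d_def field_simps)
    also have "\<dots> \<le> 2 * p z" using c2 by (simp add: p_def)
    finally show ?thesis .
  qed
  define r where "r \<xi> = \<xi> * \<bar>deriv (deriv \<psi>) \<xi>\<bar> / deriv \<psi> \<xi>" for \<xi>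
  have r_eq: "r \<xi> = \<xi> * d \<xi> / p \<xi>" if "\<xi> > 0" for \<xi>
    using that dnn[OF that] by (simp add: r_def deriv1 deriv2)
  have vt: "vartheta \<psi> lam = - (1 / pi) * (\<integral>\<zeta>. indicator {0<..} \<zeta> * Fpsi \<psi> p lam \<zeta> \<partial>lborel)"
    unfolding vartheta_def set_lebesgue_integral_def Fpsi_def using deriv1[of "lam\<^sup>2"] lam by simp
  show ?thesis
  proof (cases "\<forall>z>0. p z > 0")
    case True
    then have ppos: "\<And>z. z > 0 \<Longrightarrow> p z > 0" by blast
    define J where "J = (\<integral>\<zeta>. indicator {0<..} \<zeta> * Fpsi \<psi> p lam \<zeta> \<partial>lborel)"
    have r01: "0 \<le> r \<xi> \<and> r \<xi> \<le> 2" if "\<xi> > 0" for \<xi>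
      using r_eq[OF that] dnn[OF that] ppos[OF that] two[OF that] that
      by (auto simp: divide_le_eq)
    define S where "S = (SUP \<xi>\<in>{0<..}. ereal (r \<xi>))"
    define I where "I = (INF \<xi>\<in>{0<..}. ereal (r \<xi>))"
    have S1: "S \<le> ereal 2" unfolding S_def using r01 by (intro SUP_least) auto
    have S2: "ereal 0 \<le> S" unfolding S_def using r01[of 1]
      by (intro order_trans[OF _ SUP_upper[of 1]]) auto
    have I1: "ereal 0 \<le> I" unfolding I_def using r01 by (intro INF_greatest) auto
    have I2: "I \<le> ereal 2" unfolding I_def using r01[of 1]
      by (intro order_trans[OF INF_lower[of 1]]) auto
    obtain \<beta> where \<beta>: "S = ereal \<beta>" using S1 S2 by (cases S) auto
    obtain \<gamma> where \<gamma>: "I = ereal \<gamma>" using I1 I2 by (cases I) auto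
    have \<beta>0: "\<beta> \<ge> 0" using S2 \<beta> by simp
    have \<gamma>0: "\<gamma> \<ge> 0" using I1 \<gamma> by simp
    have rb: "r \<xi> \<le> \<beta>" if "\<xi> > 0" for \<xi>
    proof -
      have "ereal (r \<xi>) \<le> S" unfolding S_def using that by (intro SUP_upper) auto
      then show ?thesis using \<beta> by simp
    qed
    have rg: "\<gamma> \<le> r \<xi>" if "\<xi> > 0" for \<xi>
    proof -
      have "I \<le> ereal (r \<xi>)" unfolding I_def using that by (intro INF_lower) auto
      then show ?thesis using \<gamma> by simp
    qed
    have bb: "z * d z \<le> \<beta> * p z" if "z > 0" for z
      using rb[OF that] r_eq[OF that] ppos[OF that] by (simp add: divide_le_eq)
    have gg: "\<gamma> * p z \<le> z * d z" if "z > 0" for z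
      using rg[OF that] r_eq[OF that] ppos[OF that] by (simp add: le_divide_eq)
    have Jlo: "- (\<beta> * pi^2 / 4) \<le> J" unfolding J_def
      by (rule main_integral(2)[where \<psi>=\<psi> and p=p and d=d and lam=lam]) (use lam d\<psi> dp ppos dnn two \<beta>0 bb in auto)
    have Jhi: "J \<le> - (\<gamma> * pi^2 / 4)" unfolding J_def
      by (rule main_integral(3)[where \<psi>=\<psi> and p=p and d=d and lam=lam]) (use lam d\<psi> dp ppos dnn two \<gamma>0 gg in auto)
    have v: "vartheta \<psi> lam = - (1 / pi) * J" using vt by (simp add: J_def)
    have up: "vartheta \<psi> lam \<le> \<beta> * (pi / 4)"
    proof -
      have "- (1 / pi) * J \<le> - (1 / pi) * (- (\<beta> * pi^2 / 4))"
        using Jlo by (intro mult_left_mono_neg) auto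
      then show ?thesis using v by (simp add: power2_eq_square)
    qed
    have lo: "\<gamma> * (pi / 4) \<le> vartheta \<psi> lam"
    proof -
      have "- (1 / pi) * (- (\<gamma> * pi^2 / 4)) \<le> - (1 / pi) * J"
        using Jhi by (intro mult_left_mono_neg) auto
      then show ?thesis using v by (simp add: power2_eq_square)
    qed
    show ?thesis
      using up lo unfolding r_def[symmetric] S_def[symmetric] I_def[symmetric] \<beta> \<gamma> by simp
  next
    case False
    then obtain z0 where z0: "z0 > 0" "p z0 \<le> 0" by (auto simp: not_less)
    then have "c2 + D1 m z0 / pi = 0" using pnn[of z0] by (simp add: p_def)
    moreover have "D1 m z0 / pi \<ge> 0" using D1_nonneg[OF sm m0 mi, of z0] by simp
    ultimately have "c2 = 0" "D1 m z0 / pi = 0" using c2 by linarith+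
    then have "c2 = 0" "D1 m z0 = 0" by simp_all
    have F: "AE s in m. False" by (rule degenerate[OF sm m0 mi z0(1) \<open>D1 m z0 = 0\<close>])
    have p0: "p z = 0" for z
      using degenerate_int[OF sm m0 mi F, of "\<lambda>s. 1 / (z + s)\<^sup>2"] \<open>c2 = 0\<close>
      by (simp add: p_def D1_def[OF sm m0 mi])
    have d0: "d z = 0" for z
      using degenerate_int[OF sm m0 mi F, of "\<lambda>s. 1 / (z + s)^3"]
      by (simp add: d_def D2_def[OF sm m0 mi])
    have r0: "r \<xi> = 0" if "\<xi> > 0" for \<xi> using r_eq[OF that] p0 by simp
    have I0: "(INF \<xi>\<in>{0<..}. ereal (r \<xi>)) = 0"
    proof -
      have "(INF \<xi>\<in>{0<..}. ereal (r \<xi>)) = (INF \<xi>\<in>({0<..}::real set). (0::ereal))"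
        by (rule INF_cong) (auto simp: r0 zero_ereal_def)
      also have "\<dots> = 0" by (rule INF_const) simp
      finally show ?thesis .
    qed
    have S0: "(SUP \<xi>\<in>{0<..}. ereal (r \<xi>)) = 0"
    proof -
      have "(SUP \<xi>\<in>{0<..}. ereal (r \<xi>)) = (SUP \<xi>\<in>({0<..}::real set). (0::ereal))"
        by (rule SUP_cong) (auto simp: r0 zero_ereal_def)
      also have "\<dots> = 0" by (rule SUP_const) simp
      finally show ?thesis .
    qed
    have "Fpsi \<psi> p lam \<zeta> = 0" for \<zeta> by (simp add: Fpsi_def p0)
    then have "vartheta \<psi> lam = 0" using vt by simp
    then show ?thesis unfolding r_def[symmetric] I0 S0 by simp
  qed
qed

end
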